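(* For every small category $C$, the category $Sd^2(C)=Sd(Sd(C))$ is a poset; that is, for any two objects $X,Y$ of $Sd^2(C)$ there is at most one morphism $X\to Y$, and if there are morphisms $X\to Y$ and $Y\to X$ then $X=Y$.
   Context: Let $C$ be a small category. For $q\ge 0$ let $[q]=\{0<1<\dots<q\}$, viewed as a category. A $q$-simplex of the nerve $NC$ is a functor $X:[q]\to C$, i.e. a chain $X_0\to X_1\to\dots\to X_q$ of $q$ composable arrows of $C$; write $q_X=q$. A simplex is degenerate if it is of the form $Y\circ s$ for a simplex $Y$ and a surjective order-preserving map $s:[q]\to[p]$ with $p<q$ (equivalently, one of its arrows $X_{i-1}\to X_i$ is an identity); otherwise it is non-degenerate. The category $\Delta/C$ has as objects all simplices of $NC$ (of all dimensions $q\ge0$), and a morphism $X\to Y$ is an order-preserving map $\xi:[q_X]\to[q_Y]$ with $Y\circ\xi=X$, written $\xi_*$; composition is composition of maps. Given a simplex $X$ of dimension $q$ and a surjective order-preserving $s:[q+1]\to[q]$, let $d,d':[q]\to[q+1]$ be the two order-preserving right inverses of $s$; the two morphisms $d_*,d'_*:X\to X\circ s$ are called elementary equivalent. Let $\sim$ be the smallest equivalence relation on the morphisms of $\Delta/C$ (relating only morphisms with the same source and target) which is compatible with composition and contains all pairs of elementary equivalent morphisms. $[\Delta/C]$ is the quotient category with the same objects and with morphisms the $\sim$-classes $[\xi_*]$. The subdivision $Sd(C)$ is the full subcategory of $[\Delta/C]$ whose objects are the non-degenerate simplices of $NC$. Since $Sd(C)$ is again a small category, $Sd^2(C)=Sd(Sd(C))$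 is defined by applying the same construction to $Sd(C)$. *)

theory Defs
  imports Main
begin

text \<open>A small category given by a set of objects, a set of arrows, domain, codomain,
identities and composition (Comp g f = g o f).\<close>

record ('o, 'm) cat =
  Obj :: "'o set"
  Arr :: "'m set"
  Dom :: "'m \<Rightarrow> 'o"
  Cod :: "'m \<Rightarrow> 'o"
  Id  :: "'o \<Rightarrow> 'm"
  Comp :: "'m \<Rightarrow> 'm \<Rightarrow> 'm"

definition is_category :: "('o, 'm) cat \<Rightarrow> bool" where
  "is_category C \<longleftrightarrow>
     (\<forall>f \<in> Arr C. Dom C f \<in> Obj C \<and> Cod C f \<in> Obj C) \<and>
     (\<forall>x \<in> Obj C. Id C x \<in> Arr C \<and> Dom C (Id C x) = x \<and> Cod C (Id C x) = x) \<and>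
     (\<forall>f \<in> Arr C. \<forall>g \<in> Arr C. Cod C f = Dom C g \<longrightarrow>
         Comp C g f \<in> Arr C \<and> Dom C (Comp C g f) = Dom C f \<and> Cod C (Comp C g f) = Cod C g) \<and>
     (\<forall>f \<in> Arr C. Comp C f (Id C (Dom C f)) = f \<and> Comp C (Id C (Cod C f)) f = f) \<and>
     (\<forall>f \<in> Arr C. \<forall>g \<in> Arr C. \<forall>h \<in> Arr C. Cod C f = Dom C g \<longrightarrow> Cod C g = Dom C h \<longrightarrow>
         Comp C h (Comp C g f) = Comp C (Comp C h g) f)"

text \<open>A q-simplex is a functor [q] -> C, represented as the pair (q, F) where F (i,j),
for i \<le> j \<le> q, is the image of the unique arrow i -> j of [q]; F is undefined elsewhere.\<close>

type_synonym 'm simplex = "nat \<times> (nat \<times> nat \<Rightarrow> 'm)"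

definition is_functor_simplex :: "('o, 'm) cat \<Rightarrow> nat \<Rightarrow> (nat \<times> nat \<Rightarrow> 'm) \<Rightarrow> bool" where
  "is_functor_simplex C q F \<longleftrightarrow>
     (\<forall>i \<le> q. Dom C (F (i, i)) \<in> Obj C \<and> F (i, i) = Id C (Dom C (F (i, i)))) \<and>
     (\<forall>i j. i \<le> j \<and> j \<le> q \<longrightarrow>
        F (i, j) \<in> Arr C \<and> Dom C (F (i, j)) = Dom C (F (i, i)) \<and> Cod C (F (i, j)) = Dom C (F (j, j))) \<and>
     (\<forall>i j k. i \<le> j \<and> j \<le> k \<and> k \<le> q \<longrightarrow> F (i, k) = Comp C (F (j, k)) (F (i, j))) \<and>
     (\<forall>i j. \<not> (i \<le> j \<and> j \<le> q) \<longrightarrow> F (i, j) = undefined)"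

definition nerve :: "('o, 'm) cat \<Rightarrow> 'm simplex set" where
  "nerve C = {(q, F). is_functor_simplex C q F}"

definition opmap :: "nat \<Rightarrow> nat \<Rightarrow> (nat \<Rightarrow> nat) \<Rightarrow> bool" where
  "opmap p q \<xi> \<longleftrightarrow> (\<forall>i j. i \<le> j \<and> j \<le> p \<longrightarrow> \<xi> i \<le> \<xi> j) \<and> (\<forall>i \<le> p. \<xi> i \<le> q) \<and>
      (\<forall>i. p < i \<longrightarrow> \<xi> i = undefined)"

definition pull :: "'m simplex \<Rightarrow> nat \<Rightarrow> (nat \<Rightarrow> nat) \<Rightarrow> 'm simplex" where
  "pull Y p \<xi> = (p, \<lambda>(i, j). if i \<le> j \<and> j \<le> p then snd Y (\<xi> i, \<xi> j) else undefined)"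

definition mcomp :: "nat \<Rightarrow> (nat \<Rightarrow> nat) \<Rightarrow> (nat \<Rightarrow> nat) \<Rightarrow> (nat \<Rightarrow> nat)" where
  "mcomp p g f = (\<lambda>i. if i \<le> p then g (f i) else undefined)"

definition idmap :: "nat \<Rightarrow> (nat \<Rightarrow> nat)" where
  "idmap p = (\<lambda>i. if i \<le> p then i else undefined)"

definition degenerate :: "('o, 'm) cat \<Rightarrow> 'm simplex \<Rightarrow> bool" where
  "degenerate C X \<longleftrightarrow> (\<exists>Y s. Y \<in> nerve C \<and> fst Y < fst X \<and> opmap (fst X) (fst Y) s \<and>
       (\<forall>j \<le> fst Y. \<exists>i \<le> fst X. s i = j) \<and> X = pull Y (fst X) s)"

definition nondeg :: "('o, 'm) cat \<Rightarrow> 'm simplex set" where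
  "nondeg C = {X \<in> nerve C. \<not> degenerate C X}"

text \<open>A morphism of Delta/C is a triple (X, Y, \<xi>) with Y o \<xi> = X.\<close>

type_synonym 'm dmor = "'m simplex \<times> 'm simplex \<times> (nat \<Rightarrow> nat)"

definition is_mor :: "('o, 'm) cat \<Rightarrow> 'm simplex \<Rightarrow> 'm simplex \<Rightarrow> (nat \<Rightarrow> nat) \<Rightarrow> bool" where
  "is_mor C X Y \<xi> \<longleftrightarrow> X \<in> nerve C \<and> Y \<in> nerve C \<and> opmap (fst X) (fst Y) \<xi> \<and> pull Y (fst X) \<xi> = X"

text \<open>Elementary equivalent pairs: d_*, d'_* : X -> X o s for a surjection
s : [q+1] -> [q] and order-preserving right inverses d, d' of s.\<close>

definition elem_equiv :: "('o, 'm) cat \<Rightarrow> 'm dmor \<Rightarrow> 'm dmor \<Rightarrow> bool" where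
  "elem_equiv C m m' \<longleftrightarrow> (\<exists>X s d d'. X \<in> nerve C \<and>
      opmap (Suc (fst X)) (fst X) s \<and> (\<forall>j \<le> fst X. \<exists>i \<le> Suc (fst X). s i = j) \<and>
      opmap (fst X) (Suc (fst X)) d \<and> opmap (fst X) (Suc (fst X)) d' \<and>
      (\<forall>i \<le> fst X. s (d i) = i) \<and> (\<forall>i \<le> fst X. s (d' i) = i) \<and>
      m = (X, pull X (Suc (fst X)) s, d) \<and> m' = (X, pull X (Suc (fst X)) s, d'))"

inductive sim :: "('o, 'm) cat \<Rightarrow> 'm dmor \<Rightarrow> 'm dmor \<Rightarrow> bool" for C where
  sim_elem: "elem_equiv C m m' \<Longrightarrow> sim C m m'"
| sim_refl: "is_mor C X Y \<xi> \<Longrightarrow> sim C (X, Y, \<xi>) (X, Y, \<xi>)"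
| sim_sym: "sim C m m' \<Longrightarrow> sim C m' m"
| sim_trans: "sim C m m' \<Longrightarrow> sim C m' m'' \<Longrightarrow> sim C m m''"
| sim_comp: "sim C (X, Y, f) (X, Y, f') \<Longrightarrow> sim C (Y, Z, g) (Y, Z, g') \<Longrightarrow>
     sim C (X, Z, mcomp (fst X) g f) (X, Z, mcomp (fst X) g' f')"

definition cls :: "('o, 'm) cat \<Rightarrow> 'm simplex \<Rightarrow> 'm simplex \<Rightarrow> (nat \<Rightarrow> nat) \<Rightarrow> (nat \<Rightarrow> nat) set" where
  "cls C X Y \<xi> = {\<eta>. sim C (X, Y, \<eta>) (X, Y, \<xi>)}"

text \<open>Full subcategory of [Delta/C] on the non-degenerate simplices. An arrow is a triple
(X, Y, c) with c a ~-class of morphisms X -> Y.\<close>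

type_synonym 'm sdmor = "'m simplex \<times> 'm simplex \<times> (nat \<Rightarrow> nat) set"

definition Sd :: "('o, 'm) cat \<Rightarrow> ('m simplex, 'm sdmor) cat" where
  "Sd C = \<lparr> Obj = nondeg C,
            Arr = {(X, Y, c). X \<in> nondeg C \<and> Y \<in> nondeg C \<and> (\<exists>\<xi>. is_mor C X Y \<xi> \<and> c = cls C X Y \<xi>)},
            Dom = (\<lambda>(X, Y, c). X),
            Cod = (\<lambda>(X, Y, c). Y),
            Id = (\<lambda>X. (X, X, cls C X X (idmap (fst X)))),
            Comp = (\<lambda>(Y', Z, c2) (X, Y, c1).
               (X, Z, cls C X Z (mcomp (fst X) (SOME g. g \<in> c2) (SOME f. f \<in> c1)))) \<rparr>"

end

theory Submission imports Defs begin

lemma pull_nerve: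
  assumes X: "X \<in> nerve D" and op: "opmap r (fst X) \<theta>"
  shows "pull X r \<theta> \<in> nerve D"
proof -
  obtain q F where XF: "X = (q,F)" by (cases X)
  have fs: "is_functor_simplex D q F" using X XF by (simp add: nerve_def)
  have m: "\<And>i j. i \<le> j \<Longrightarrow> j \<le> r \<Longrightarrow> \<theta> i \<le> \<theta> j" and b: "\<And>i. i \<le> r \<Longrightarrow> \<theta> i \<le> q"
    using op XF unfolding opmap_def by auto
  have f1: "\<And>i. i \<le> q \<Longrightarrow> Dom D (F (i, i)) \<in> Obj D \<and> F (i, i) = Id D (Dom D (F (i, i)))"
   and f2: "\<And>i j. i \<le> j \<Longrightarrow> j \<le> q \<Longrightarrow> F (i, j) \<in> Arr D \<and> Dom D (F (i, j)) = Dom D (F (i, i)) \<and> Cod D (F (i, j)) = Dom D (F (j, j))"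
   and f3: "\<And>i j k. i \<le> j \<Longrightarrow> j \<le> k \<Longrightarrow> k \<le> q \<Longrightarrow> F (i, k) = Comp D (F (j, k)) (F (i, j))"
    using fs unfolding is_functor_simplex_def by blast+
  show ?thesis
    unfolding XF pull_def nerve_def is_functor_simplex_def
  proof (simp, intro conjI allI impI)
    fix i assume "i \<le> r" thus "Dom D (F (\<theta> i, \<theta> i)) \<in> Obj D" "F (\<theta> i, \<theta> i) = Id D (Dom D (F (\<theta> i, \<theta> i)))"
      using f1 b by auto
  next
    fix i j assume "i \<le> j \<and> j \<le> r"
    hence "\<theta> i \<le> \<theta> j" "\<theta> j \<le> q" "\<theta> i \<le> q" using m b by auto
    thus "F (\<theta> i, \<theta> j) \<in> Arr D" "Dom D (F (\<theta> i, \<theta> j)) = Dom D (F (\<theta> i, \<theta> i))"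
      "Cod D (F (\<theta> i, \<theta> j)) = Dom D (F (\<theta> j, \<theta> j))" using f2[of "\<theta> i" "\<theta> j"] by auto
  next
    fix i j k assume "i \<le> j \<and> j \<le> k \<and> k \<le> r"
    hence "\<theta> i \<le> \<theta> j" "\<theta> j \<le> \<theta> k" "\<theta> k \<le> q" using m b by auto
    thus "F (\<theta> i, \<theta> k) = Comp D (F (\<theta> j, \<theta> k)) (F (\<theta> i, \<theta> j))" using f3[of "\<theta> i" "\<theta> j" "\<theta> k"] by auto
  qed
qed

lemma fs_facts:
  assumes "(q,F) \<in> nerve D"
  shows "\<And>i. i \<le> q \<Longrightarrow> Dom D (F (i, i)) \<in> Obj D \<and> F (i, i) = Id D (Dom D (F (i, i)))"
   and "\<And>i j. i \<le> j \<Longrightarrow> j \<le> q \<Longrightarrow> F (i, j) \<in> Arr D \<and> Dom D (F (i, j)) = Dom D (F (i, i)) \<and> Cod D (F (i, j)) = Dom D (F (j, j))"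
   and "\<And>i j k. i \<le> j \<Longrightarrow> j \<le> k \<Longrightarrow> k \<le> q \<Longrightarrow> F (i, k) = Comp D (F (j, k)) (F (i, j))"
   and "\<And>i j. \<not> (i \<le> j \<and> j \<le> q) \<Longrightarrow> F (i, j) = undefined"
  using assms unfolding nerve_def is_functor_simplex_def by blast+

lemma degen:
  assumes H1: "\<And>x. x \<in> Obj D \<Longrightarrow> Cod D (Id D x) = x"
    and H2: "\<And>f. f \<in> Arr D \<Longrightarrow> Comp D f (Id D (Dom D f)) = f"
    and H3: "\<And>f. f \<in> Arr D \<Longrightarrow> Comp D (Id D (Cod D f)) f = f"
    and X: "(p,F) \<in> nerve D" and i: "i < p" and eq: "F (i, Suc i) = F (i,i)"
  shows "degenerate D (p,F)"
proof -
  note f = fs_facts[OF X]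
  define \<delta> where "\<delta> = (\<lambda>k. if k \<le> p-1 then (if k \<le> i then k else Suc k) else undefined)"
  define s where "s = (\<lambda>k. if k \<le> p then (if k \<le> i then k else k - 1) else undefined)"
  define Y where "Y = pull (p,F) (p-1) \<delta>"
  have op1: "opmap (p-1) p \<delta>" unfolding opmap_def \<delta>_def using i by auto
  have Y: "Y \<in> nerve D" using pull_nerve[OF X] op1 Y_def by simp
  have fY: "fst Y = p - 1" by (simp add: Y_def pull_def)
  have op2: "opmap p (p-1) s" unfolding opmap_def s_def using i by auto
  have surj: "\<forall>j \<le> p-1. \<exists>k\<le>p. s k = j"
  proof (intro allI impI)
    fix j assume j: "j \<le> p - 1"
    show "\<exists>k\<le>p. s k = j"
    proof (cases "j \<le> i")
      case True thus ?thesis using i by (intro exI[of _ j]) (auto simp: s_def)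
    next
      case False thus ?thesis using i j by (intro exI[of _ "Suc j"]) (auto simp: s_def)
    qed
  qed
  have Vi: "Dom D (F (Suc i, Suc i)) = Dom D (F (i,i))"
  proof -
    have "Dom D (F (Suc i, Suc i)) = Cod D (F (i, Suc i))" using f(2)[of i "Suc i"] i by auto
    also have "\<dots> = Cod D (F (i, i))" using eq by simp
    also have "\<dots> = Dom D (F (i,i))" using f(1)[of i] i H1 by (metis less_imp_le)
    finally show ?thesis .
  qed
  have key: "F (a, b) = F (if a = Suc i then i else a, if b = Suc i then i else b)" if ab: "a \<le> b" "b \<le> p" for a b
  proof -
    consider "a \<noteq> Suc i" "b \<noteq> Suc i" | "a = Suc i" "b = Suc i" | "a = Suc i" "b \<noteq> Suc i" | "a \<noteq> Suc i" "b = Suc i" by blast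
    thus ?thesis
    proof cases
      case 1 thus ?thesis by simp
    next
      case 2 thus ?thesis using f(1)[of i] f(1)[of "Suc i"] i Vi by auto
    next
      case 3
      have "F (i, b) = Comp D (F (Suc i, b)) (F (i, Suc i))" using f(3)[of i "Suc i" b] 3 ab by auto
      also have "\<dots> = Comp D (F (Suc i, b)) (Id D (Dom D (F (Suc i, b))))"
        using eq f(1)[of i] f(2)[of "Suc i" b] Vi 3 ab i by auto
      also have "\<dots> = F (Suc i, b)" using H2[of "F (Suc i, b)"] f(2)[of "Suc i" b] 3 ab by simp
      finally show ?thesis using 3 by simp
    next
      case 4
      have "F (a, Suc i) = Comp D (F (i, Suc i)) (F (a, i))" using f(3)[of a i "Suc i"] 4 ab by auto
      also have "\<dots> = Comp D (Id D (Cod D (F (a, i)))) (F (a, i))"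
        using eq f(1)[of i] f(2)[of a i] 4 ab i by auto
      also have "\<dots> = F (a, i)" using H3[of "F (a, i)"] f(2)[of a i] 4 ab by simp
      finally show ?thesis using 4 by simp
    qed
  qed
  have ds: "\<delta> (s k) = (if k = Suc i then i else k)" if "k \<le> p" for k
  proof (cases "k \<le> i")
    case True thus ?thesis using that i by (auto simp add: s_def \<delta>_def)
  next
    case False
    hence "s k = k - 1" using that by (simp add: s_def)
    moreover have "k - 1 \<le> p - 1" using that by simp
    ultimately show ?thesis using False by (auto simp add: \<delta>_def)
  qed
  have eqX: "(p,F) = pull Y p s"
  proof -
    have "F (a, b) = (if a \<le> b \<and> b \<le> p then snd Y (s a, s b) else undefined)" for a b
    proof (cases "a \<le> b \<and> b \<le> p")
      case True
      have "s a \<le> s b" "s b \<le> p - 1" using True op2 unfolding opmap_def by auto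
      hence "snd Y (s a, s b) = F (\<delta> (s a), \<delta> (s b))" by (simp add: Y_def pull_def)
      also have "\<dots> = F (if a = Suc i then i else a, if b = Suc i then i else b)"
        using True ds[of a] ds[of b] by simp
      finally have c: "snd Y (s a, s b) = F (if a = Suc i then i else a, if b = Suc i then i else b)" .
      have k: "F (a, b) = F (if a = Suc i then i else a, if b = Suc i then i else b)"
        using key True by blast
      have "(if a \<le> b \<and> b \<le> p then snd Y (s a, s b) else undefined) = snd Y (s a, s b)"
        using True by simp
      thus ?thesis using c k by metis
    next
      case False thus ?thesis using f(4)[of a b] by auto
    qed
    thus ?thesis by (auto simp: pull_def fun_eq_iff)
  qed
  have "fst Y < fst (p,F)" using fY i by simp
  moreover have "opmap (fst (p,F)) (fst Y) s" using op2 fY by simp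
  moreover have "\<forall>j \<le> fst Y. \<exists>k \<le> fst (p,F). s k = j" using surj fY by simp
  moreover have "(p,F) = pull Y (fst (p,F)) s" unfolding fst_conv by (rule eqX)
  ultimately show ?thesis unfolding degenerate_def using Y by blast
qed


lemma mor_strict:
  assumes H1: "\<And>x. x \<in> Obj D \<Longrightarrow> Cod D (Id D x) = x"
    and H2: "\<And>f. f \<in> Arr D \<Longrightarrow> Comp D f (Id D (Dom D f)) = f"
    and H3: "\<And>f. f \<in> Arr D \<Longrightarrow> Comp D (Id D (Cod D f)) f = f"
    and X: "X \<in> nondeg D" and m: "is_mor D X Y \<xi>" and i: "i < fst X"
  shows "\<xi> i < \<xi> (Suc i)"
proof (rule ccontr)
  assume a: "\<not> \<xi> i < \<xi> (Suc i)"
  obtain p F where XF: "X = (p,F)" by (cases X)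
  obtain q G where YG: "Y = (q,G)" by (cases Y)
  have op: "opmap p q \<xi>" and pl: "pull (q,G) p \<xi> = (p,F)" and Xn: "(p,F) \<in> nerve D"
    using m XF YG unfolding is_mor_def by auto
  have "\<xi> i \<le> \<xi> (Suc i)" using op i XF unfolding opmap_def by auto
  hence e: "\<xi> i = \<xi> (Suc i)" using a by simp
  have Fe: "F (a,b) = G (\<xi> a, \<xi> b)" if "a \<le> b" "b \<le> p" for a b
  proof -
    have "F = snd (pull (q,G) p \<xi>)" using pl by simp
    thus ?thesis using that by (simp add: pull_def)
  qed
  have "F (i, Suc i) = F (i, i)" using Fe[of i "Suc i"] Fe[of i i] e i XF by simp
  hence "degenerate D (p,F)" using degen[OF H1 H2 H3 Xn, of i] i XF by auto
  thus False using X XF unfolding nondeg_def by simp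
qed

lemma mor_dim:
  assumes H1: "\<And>x. x \<in> Obj D \<Longrightarrow> Cod D (Id D x) = x"
    and H2: "\<And>f. f \<in> Arr D \<Longrightarrow> Comp D f (Id D (Dom D f)) = f"
    and H3: "\<And>f. f \<in> Arr D \<Longrightarrow> Comp D (Id D (Cod D f)) f = f"
    and X: "X \<in> nondeg D" and m: "is_mor D X Y \<xi>"
  shows "fst X \<le> fst Y \<and> (fst X = fst Y \<longrightarrow> \<xi> = idmap (fst X) \<and> X = Y)"
proof -
  obtain p F where XF: "X = (p,F)" by (cases X)
  obtain q G where YG: "Y = (q,G)" by (cases Y)
  have op: "opmap p q \<xi>" and pl: "pull (q,G) p \<xi> = (p,F)" and Yn: "(q,G) \<in> nerve D"
    using m XF YG unfolding is_mor_def by auto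
  have st: "\<xi> i < \<xi> (Suc i)" if "i < p" for i using mor_strict[OF H1 H2 H3 X m] that XF by simp
  have bnd: "\<xi> i \<le> q" if "i \<le> p" for i using op that unfolding opmap_def by auto
  have und: "\<xi> i = undefined" if "p < i" for i using op that unfolding opmap_def by auto
  have gen: "i + k \<le> p \<longrightarrow> \<xi> i + k \<le> \<xi> (i + k)" for i k
  proof (induction k)
    case 0 thus ?case by simp
  next
    case (Suc k) show ?case using Suc st[of "i+k"] by auto
  qed
  have "\<xi> 0 + p \<le> \<xi> p" using gen[of 0 p] by simp
  hence pq: "p \<le> q" using bnd[of p] by simp
  moreover have "\<xi> = idmap p \<and> X = Y" if pq': "p = q"
  proof -
    have "\<xi> i = i" if "i \<le> p" for i
    proof -
      have "\<xi> 0 + i \<le> \<xi> i" using gen[of 0 i] that by simp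
      moreover have "\<xi> i + (p - i) \<le> \<xi> p" using gen[of i "p - i"] that by simp
      ultimately show ?thesis using bnd[of p] pq' that by simp
    qed
    hence xi: "\<xi> = idmap p" using und unfolding idmap_def by (auto simp: fun_eq_iff)
    have Gu: "G (a,b) = undefined" if "\<not> (a \<le> b \<and> b \<le> q)" for a b
      using fs_facts(4)[OF Yn] that by blast
    have "pull (q,G) p \<xi> = (q,G)" using pq' xi Gu
      by (auto simp: pull_def idmap_def fun_eq_iff)
    thus ?thesis using pl xi XF YG by simp
  qed
  ultimately show ?thesis using XF YG by simp
qed


lemma is_mor_id: "X \<in> nerve C \<Longrightarrow> is_mor C X X (idmap (fst X))"
proof -
  assume Xn: "X \<in> nerve C"
  obtain p F where XF: "X = (p,F)" by (cases X)
  have Fu: "F (a,b) = undefined" if "\<not> (a \<le> b \<and> b \<le> p)" for a b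
    using fs_facts(4)[of p F C] Xn XF that by blast
  have "pull (p,F) p (idmap p) = (p,F)" using Fu by (auto simp: pull_def idmap_def fun_eq_iff)
  moreover have "opmap p p (idmap p)" by (auto simp: opmap_def idmap_def)
  ultimately show ?thesis using Xn XF by (simp add: is_mor_def)
qed

lemma mcomp_idl: "opmap p q \<xi> \<Longrightarrow> mcomp p (idmap q) \<xi> = \<xi>"
  by (auto simp: opmap_def mcomp_def idmap_def fun_eq_iff)

lemma mcomp_idr: "opmap p q \<xi> \<Longrightarrow> mcomp p \<xi> (idmap p) = \<xi>"
  by (auto simp: opmap_def mcomp_def idmap_def fun_eq_iff)

lemma cls_eq: "sim C (X,Y,\<eta>) (X,Y,\<xi>) \<Longrightarrow> cls C X Y \<eta> = cls C X Y \<xi>"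
  unfolding cls_def by (blast intro: sim_trans sim_sym)

lemma cls_mem: "is_mor C X Y \<xi> \<Longrightarrow> \<xi> \<in> cls C X Y \<xi>"
  unfolding cls_def by (blast intro: sim_refl)

lemma Sd_H1: "Cod (Sd C) (Id (Sd C) x) = x"
  by (simp add: Sd_def)

lemma Sd_H2:
  assumes f: "f \<in> Arr (Sd C)"
  shows "Comp (Sd C) f (Id (Sd C) (Dom (Sd C) f)) = f"
proof -
  obtain A B \<xi> where fe: "f = (A, B, cls C A B \<xi>)" and A: "A \<in> nondeg C" and m: "is_mor C A B \<xi>"
    using f by (auto simp: Sd_def)
  have An: "A \<in> nerve C" using A by (simp add: nondeg_def)
  define g where "g = (SOME g. g \<in> cls C A B \<xi>)"
  define h where "h = (SOME h. h \<in> cls C A A (idmap (fst A)))"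
  have g: "sim C (A,B,g) (A,B,\<xi>)" proof -
    have "g \<in> cls C A B \<xi>" unfolding g_def using cls_mem[OF m] some_in_eq by blast
    thus ?thesis by (simp add: cls_def)
  qed
  have h: "sim C (A,A,h) (A,A,idmap (fst A))" proof -
    have "h \<in> cls C A A (idmap (fst A))" unfolding h_def using cls_mem[OF is_mor_id[OF An]] some_in_eq by blast
    thus ?thesis by (simp add: cls_def)
  qed
  have "sim C (A,B, mcomp (fst A) g h) (A,B, mcomp (fst A) \<xi> (idmap (fst A)))"
    by (rule sim_comp[OF h g])
  moreover have "mcomp (fst A) \<xi> (idmap (fst A)) = \<xi>" using m mcomp_idr unfolding is_mor_def by blast
  ultimately have "cls C A B (mcomp (fst A) g h) = cls C A B \<xi>" using cls_eq by metis
  thus ?thesis unfolding fe by (simp add: Sd_def g_def h_def)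
qed

lemma Sd_H3:
  assumes f: "f \<in> Arr (Sd C)"
  shows "Comp (Sd C) (Id (Sd C) (Cod (Sd C) f)) f = f"
proof -
  obtain A B \<xi> where fe: "f = (A, B, cls C A B \<xi>)" and B: "B \<in> nondeg C" and m: "is_mor C A B \<xi>"
    using f by (auto simp: Sd_def)
  have Bn: "B \<in> nerve C" using B by (simp add: nondeg_def)
  define g where "g = (SOME g. g \<in> cls C A B \<xi>)"
  define h where "h = (SOME h. h \<in> cls C B B (idmap (fst B)))"
  have g: "sim C (A,B,g) (A,B,\<xi>)" proof -
    have "g \<in> cls C A B \<xi>" unfolding g_def using cls_mem[OF m] some_in_eq by blast
    thus ?thesis by (simp add: cls_def)
  qed
  have h: "sim C (B,B,h) (B,B,idmap (fst B))" proof -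
    have "h \<in> cls C B B (idmap (fst B))" unfolding h_def using cls_mem[OF is_mor_id[OF Bn]] some_in_eq by blast
    thus ?thesis by (simp add: cls_def)
  qed
  have "sim C (A,B, mcomp (fst A) h g) (A,B, mcomp (fst A) (idmap (fst B)) \<xi>)"
    by (rule sim_comp[OF g h])
  moreover have "mcomp (fst A) (idmap (fst B)) \<xi> = \<xi>" using m mcomp_idl unfolding is_mor_def by blast
  ultimately have "cls C A B (mcomp (fst A) h g) = cls C A B \<xi>" using cls_eq by metis
  thus ?thesis unfolding fe by (simp add: Sd_def g_def h_def)
qed


lemma cat_H:
  assumes "is_category C"
  shows "\<And>x. x \<in> Obj C \<Longrightarrow> Cod C (Id C x) = x"
    and "\<And>f. f \<in> Arr C \<Longrightarrow> Comp C f (Id C (Dom C f)) = f"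
    and "\<And>f. f \<in> Arr C \<Longrightarrow> Comp C (Id C (Cod C f)) f = f"
  using assms unfolding is_category_def by blast+

lemma Sd_vert_step:
  assumes cat: "is_category C" and Y: "(q,G) \<in> nondeg (Sd C)" and j: "j < q"
  shows "fst (Dom (Sd C) (G (j,j))) < fst (Dom (Sd C) (G (Suc j, Suc j)))"
proof -
  have Yn: "(q,G) \<in> nerve (Sd C)" using Y by (simp add: nondeg_def)
  note f = fs_facts[OF Yn]
  have a: "G (j, Suc j) \<in> Arr (Sd C)" and d: "Dom (Sd C) (G (j, Suc j)) = Dom (Sd C) (G (j,j))"
    and c: "Cod (Sd C) (G (j, Suc j)) = Dom (Sd C) (G (Suc j, Suc j))"
    using f(2)[of j "Suc j"] j by auto
  obtain A B \<zeta> where ge: "G (j, Suc j) = (A, B, cls C A B \<zeta>)" and A: "A \<in> nondeg C"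
    and m: "is_mor C A B \<zeta>" using a by (auto simp: Sd_def)
  have dA: "Dom (Sd C) (G (j,j)) = A" using d ge by (simp add: Sd_def)
  have cB: "Dom (Sd C) (G (Suc j, Suc j)) = B" using c ge by (simp add: Sd_def)
  have md: "fst A \<le> fst B \<and> (fst A = fst B \<longrightarrow> \<zeta> = idmap (fst A) \<and> A = B)"
    by (rule mor_dim[OF cat_H[OF cat] A m])
  show ?thesis
  proof (rule ccontr)
    assume "\<not> ?thesis"
    hence "fst A = fst B" using md dA cB by simp
    hence "\<zeta> = idmap (fst A)" "A = B" using md by auto
    hence "G (j, Suc j) = Id (Sd C) (Dom (Sd C) (G (j,j)))" using ge dA by (simp add: Sd_def)
    also have "\<dots> = G (j,j)" using f(1)[of j] j by simp
    finally have "degenerate (Sd C) (q,G)"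
      using degen[of "Sd C", OF Sd_H1 Sd_H2 Sd_H3 Yn j] by blast
    thus False using Y by (simp add: nondeg_def)
  qed
qed

lemma Sd_vert_mono:
  assumes cat: "is_category C" and Y: "(q,G) \<in> nondeg (Sd C)"
  shows "j < k \<Longrightarrow> k \<le> q \<Longrightarrow> fst (Dom (Sd C) (G (j,j))) < fst (Dom (Sd C) (G (k,k)))"
proof (induction k)
  case 0 thus ?case by simp
next
  case (Suc k)
  have s: "fst (Dom (Sd C) (G (k,k))) < fst (Dom (Sd C) (G (Suc k, Suc k)))"
    using Sd_vert_step[OF cat Y, of k] Suc.prems by simp
  show ?case
  proof (cases "j = k")
    case True thus ?thesis using s by simp
  next
    case False thus ?thesis using Suc s by simp
  qed
qed

lemma Sd_mor_unique:
  assumes cat: "is_category C" and Y: "Y \<in> nondeg (Sd C)"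
    and m1: "is_mor (Sd C) X Y \<xi>" and m2: "is_mor (Sd C) X Y \<eta>"
  shows "\<xi> = \<eta>"
proof
  fix i
  obtain p F where XF: "X = (p,F)" by (cases X)
  obtain q G where YG: "Y = (q,G)" by (cases Y)
  have o1: "opmap p q \<xi>" and p1: "pull (q,G) p \<xi> = (p,F)"
   and o2: "opmap p q \<eta>" and p2: "pull (q,G) p \<eta> = (p,F)"
    using m1 m2 XF YG unfolding is_mor_def by auto
  show "\<xi> i = \<eta> i"
  proof (cases "i \<le> p")
    case False thus ?thesis using o1 o2 unfolding opmap_def by auto
  next
    case True
    have "F (i,i) = G (\<xi> i, \<xi> i)"
    proof -
      have "F = snd (pull (q,G) p \<xi>)" using p1 by simp
      thus ?thesis using True by (simp add: pull_def)
    qed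
    moreover have "F (i,i) = G (\<eta> i, \<eta> i)"
    proof -
      have "F = snd (pull (q,G) p \<eta>)" using p2 by simp
      thus ?thesis using True by (simp add: pull_def)
    qed
    ultimately have e: "G (\<xi> i, \<xi> i) = G (\<eta> i, \<eta> i)" by simp
    have b: "\<xi> i \<le> q" "\<eta> i \<le> q" using o1 o2 True unfolding opmap_def by auto
    show ?thesis
    proof (rule ccontr)
      assume ne: "\<xi> i \<noteq> \<eta> i"
      show False
      proof (cases "\<xi> i < \<eta> i")
        case True thus False using Sd_vert_mono[OF cat Y[unfolded YG], of "\<xi> i" "\<eta> i"] b e by simp
      next
        case False hence "\<eta> i < \<xi> i" using ne by simp
        thus False using Sd_vert_mono[OF cat Y[unfolded YG], of "\<eta> i" "\<xi> i"] b e by simp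
      qed
    qed
  qed
qed

theorem theorem21:
  fixes C :: "('o, 'm) cat"
  assumes "is_category C"
  shows "(\<forall>f \<in> Arr (Sd (Sd C)). \<forall>g \<in> Arr (Sd (Sd C)).
            Dom (Sd (Sd C)) f = Dom (Sd (Sd C)) g \<and> Cod (Sd (Sd C)) f = Cod (Sd (Sd C)) g \<longrightarrow> f = g)
       \<and> (\<forall>f \<in> Arr (Sd (Sd C)). \<forall>g \<in> Arr (Sd (Sd C)).
            Dom (Sd (Sd C)) f = Cod (Sd (Sd C)) g \<and> Cod (Sd (Sd C)) f = Dom (Sd (Sd C)) g
            \<longrightarrow> Dom (Sd (Sd C)) f = Cod (Sd (Sd C)) f)"
proof (intro conjI ballI impI)
  fix f g assume f: "f \<in> Arr (Sd (Sd C))" and g: "g \<in> Arr (Sd (Sd C))"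
    and e: "Dom (Sd (Sd C)) f = Dom (Sd (Sd C)) g \<and> Cod (Sd (Sd C)) f = Cod (Sd (Sd C)) g"
  obtain X Y \<xi> where fe: "f = (X, Y, cls (Sd C) X Y \<xi>)" and Y: "Y \<in> nondeg (Sd C)"
    and m: "is_mor (Sd C) X Y \<xi>" using f by (auto simp: Sd_def[of "Sd C"])
  obtain X' Y' \<eta> where ge: "g = (X', Y', cls (Sd C) X' Y' \<eta>)"
    and m': "is_mor (Sd C) X' Y' \<eta>" using g by (auto simp: Sd_def[of "Sd C"])
  have "X' = X" "Y' = Y" using e fe ge by (auto simp: Sd_def[of "Sd C"])
  hence "\<xi> = \<eta>" using Sd_mor_unique[OF assms Y m] m' by simp
  thus "f = g" using fe ge \<open>X' = X\<close> \<open>Y' = Y\<close> by simp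
next
  fix f g assume f: "f \<in> Arr (Sd (Sd C))" and g: "g \<in> Arr (Sd (Sd C))"
    and e: "Dom (Sd (Sd C)) f = Cod (Sd (Sd C)) g \<and> Cod (Sd (Sd C)) f = Dom (Sd (Sd C)) g"
  obtain X Y \<xi> where fe: "f = (X, Y, cls (Sd C) X Y \<xi>)" and X: "X \<in> nondeg (Sd C)"
    and m: "is_mor (Sd C) X Y \<xi>" using f by (auto simp: Sd_def[of "Sd C"])
  obtain X' Y' \<eta> where ge: "g = (X', Y', cls (Sd C) X' Y' \<eta>)" and X': "X' \<in> nondeg (Sd C)"
    and m': "is_mor (Sd C) X' Y' \<eta>" using g by (auto simp: Sd_def[of "Sd C"])
  have "X' = Y" "Y' = X" using e fe ge by (auto simp: Sd_def[of "Sd C"])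
  have d1: "fst X \<le> fst Y \<and> (fst X = fst Y \<longrightarrow> \<xi> = idmap (fst X) \<and> X = Y)"
    by (rule mor_dim[of "Sd C", OF Sd_H1 Sd_H2 Sd_H3 X m])
  have d2: "fst Y \<le> fst X"
    using mor_dim[of "Sd C", OF Sd_H1 Sd_H2 Sd_H3 X' m'] \<open>X' = Y\<close> \<open>Y' = X\<close> by simp
  have "X = Y" using d1 d2 by simp
  thus "Dom (Sd (Sd C)) f = Cod (Sd (Sd C)) f" using fe by (simp add: Sd_def[of "Sd C"])
qed

end
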